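(* (Convolution lemma.) Let $x_0,\dots,x_q$ be complex numbers (repetitions allowed), $q\ge1$, let $0\le j\le q-1$, and let $\beta>0$. Then $$\int_0^\beta e^{-\tau[x_{j+1},\ldots,x_q]}\,e^{-(\beta-\tau)[x_0,\ldots,x_j]}\,\mathrm{d}\tau=-e^{-\beta[x_0,\ldots,x_q]}.$$
   Context: For $t\in\mathbb{R}$ and numbers $y_0,\dots,y_p$ (repetitions allowed), $e^{t[y_0,\ldots,y_p]}$ denotes the divided difference of $f(x)=e^{tx}$ at $y_0,\dots,y_p$, defined by $f[y_0,\ldots,y_p]=\frac{1}{2\pi i}\oint_\Gamma\frac{f(x)}{\prod_{i=0}^p(x-y_i)}\,\mathrm{d}x$ with $\Gamma$ a positively oriented contour enclosing all $y_i$. Thus $e^{-\tau[\cdots]}$ is the divided difference of $x\mapsto e^{-\tau x}$. *)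

theory Defs
  imports "HOL-Complex_Analysis.Complex_Analysis"
begin

text \<open>Divided difference of f at the nodes ys (repetitions allowed), defined by the
contour integral (1/(2 pi i)) of f(x) / prod (x - y_i) over a positively oriented
circle enclosing all nodes; we take the circle centred at 0 of radius
1 + sum of the moduli of the nodes.\<close>
definition divdiff :: "(complex \<Rightarrow> complex) \<Rightarrow> complex list \<Rightarrow> complex" where
  "divdiff f ys =
     contour_integral (circlepath 0 (1 + (\<Sum>y\<leftarrow>ys. norm y)))
       (\<lambda>x. f x / (\<Prod>y\<leftarrow>ys. (x - y))) / (2 * of_real pi * \<i>)"

text \<open>e^{t[ys]}: divided difference of x \<mapsto> e^{t x}.\<close>
definition exp_dd :: "real \<Rightarrow> complex list \<Rightarrow> complex" where
  "exp_dd t ys = divdiff (\<lambda>x. exp (of_real t * x)) ys"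

end

theory Submission
  imports Defs
begin

definition pl :: "complex list \<Rightarrow> complex \<Rightarrow> complex" where
  "pl L z = (\<Prod>y\<leftarrow>L. (z - y))"

lemma pl_Cons[simp]: "pl (a # L) z = (z - a) * pl L z"
  by (simp add: pl_def)
lemma pl_Nil[simp]: "pl [] z = 1"
  by (simp add: pl_def)
lemma pl_append: "pl (L1 @ L2) z = pl L1 z * pl L2 z"
  by (simp add: pl_def)

lemma pl_nz: "z \<notin> set L \<Longrightarrow> pl L z \<noteq> 0"
  by (induction L) auto

lemma pl_holo[holomorphic_intros]: "g holomorphic_on S \<Longrightarrow> (\<lambda>z. pl L (g z)) holomorphic_on S"
  by (induction L) (auto intro!: holomorphic_intros)

lemma pl_cont[continuous_intros]: "continuous_on S g \<Longrightarrow> continuous_on S (\<lambda>z. pl L (g z))"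
  by (induction L) (auto intro!: continuous_intros)

lemma cont_circ_param:
  fixes F :: "'a::topological_space \<Rightarrow> complex \<Rightarrow> complex"
  assumes "continuous_on (U \<times> sphere 0 r) (\<lambda>(x,z). F x z)" "r > 0"
  shows "continuous_on U (\<lambda>x. contour_integral (circlepath 0 r) (F x))"
proof -
  have eq: "contour_integral (circlepath 0 r) (F x) =
     integral (cbox 0 1) (\<lambda>t. F x (circlepath 0 r t) * (2 * pi * \<i> * r * exp(2 * of_real pi * \<i> * t)))" for x
    unfolding contour_integral_integral vector_derivative_circlepath by simp
  have im: "(\<lambda>p. (fst p, circlepath 0 r (snd p))) ` (U \<times> cbox 0 1) \<subseteq> U \<times> sphere 0 r"
    using assms(2) by (auto simp: circlepath norm_mult)
  have c1: "continuous_on (U \<times> cbox 0 1) (\<lambda>p. (fst p, circlepath 0 r (snd p)))"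
    unfolding circlepath by (intro continuous_intros)
  have c2: "continuous_on (U \<times> cbox 0 1) (\<lambda>p. F (fst p) (circlepath 0 r (snd p)))"
    using continuous_on_compose[OF c1 continuous_on_subset[OF assms(1) im]] by (simp add: o_def)
  show ?thesis unfolding eq
    by (rule integral_continuous_on_param) (auto simp: split_beta intro!: continuous_intros c2[unfolded cbox_interval])
qed

lemma circ_residues:
  assumes "finite s" "f holomorphic_on (UNIV - s)" "r > 0" "\<forall>p\<in>s. norm p \<noteq> r"
  shows "contour_integral (circlepath 0 r) f = 2*pi*\<i> * (\<Sum>p\<in>{p\<in>s. norm p < r}. residue f p)"
proof -
  have pi: "path_image (circlepath 0 r) = sphere 0 r" using assms(3) by simp
  have "contour_integral (circlepath 0 r) f = 2*pi*\<i> * (\<Sum>p\<in>s. winding_number (circlepath 0 r) p * residue f p)"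
    by (rule Residue_theorem[of UNIV]) (use assms pi in auto)
  also have "(\<Sum>p\<in>s. winding_number (circlepath 0 r) p * residue f p) = (\<Sum>p\<in>s. if norm p < r then residue f p else 0)"
  proof (rule sum.cong)
    fix p assume p: "p \<in> s"
    show "winding_number (circlepath 0 r) p * residue f p = (if norm p < r then residue f p else 0)"
    proof (cases "norm p < r")
      case True then show ?thesis by (simp add: winding_number_circlepath)
    next
      case False
      with assms(4) p have "norm p > r" by force
      then have "winding_number (circlepath 0 r) p = 0"
        by (intro winding_number_zero_outside[of _ "cball 0 r"]) (use pi in auto)
      with False show ?thesis by simp
    qed
  qed simp
  also have "\<dots> = (\<Sum>p\<in>{p\<in>s. norm p < r}. residue f p)"
    using sum.inter_filter[OF assms(1)] by metis
  finally show ?thesis .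
qed

lemma norm_le_sum_norms: "(y::complex) \<in> set L \<Longrightarrow> norm y \<le> (\<Sum>y\<leftarrow>L. norm y)"
proof (induction L)
  case (Cons a L)
  have "0 \<le> (\<Sum>y\<leftarrow>L. norm y)" by (rule sum_list_nonneg) auto
  have "0 \<le> norm a" by simp
  with Cons \<open>0 \<le> (\<Sum>y\<leftarrow>L. norm y)\<close> show ?case by (cases "y = a") (auto intro!: add_increasing)
qed simp

lemma pl_norm_ge: "(\<forall>y\<in>set L. a \<le> norm (x - y)) \<Longrightarrow> 0 \<le> a \<Longrightarrow> a ^ length L \<le> norm (pl L x)"
proof (induction L)
  case (Cons b L)
  then have "a * a ^ length L \<le> norm (x - b) * norm (pl L x)"
    by (intro mult_mono) auto
  then show ?case by (simp add: norm_mult)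
qed simp

lemma pl_holo_div: "(\<lambda>z. f z / pl L z) holomorphic_on (UNIV - set L)" if "f holomorphic_on UNIV"
  by (intro holomorphic_intros holomorphic_on_subset[OF that]) (auto simp: pl_nz)

lemma circ_zero:
  assumes "length L \<ge> 2" "\<forall>y\<in>set L. norm y < r"
  shows "contour_integral (circlepath 0 r) (\<lambda>z. 1 / pl L z) = 0"
proof -
  define c where "c = contour_integral (circlepath 0 r) (\<lambda>z. 1 / pl L z)"
  define S where "S = (\<Sum>y\<leftarrow>L. norm y)"
  obtain y0 where "y0 \<in> set L" using assms(1) by (cases L) auto
  then have r0: "r > 0" using assms(2) by (meson norm_ge_zero order_le_less_trans)
  have S0: "S \<ge> 0" unfolding S_def by (rule sum_list_nonneg) auto
  have holo: "(\<lambda>z. 1 / pl L z) holomorphic_on (UNIV - set L)"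
    using pl_holo_div[of "\<lambda>_. 1"] by simp
  have bound: "norm c \<le> 8 * pi / r'" if r': "r' \<ge> r" "r' \<ge> 2 * S + 2" for r'
  proof -
    have r'0: "r' > 0" using r' r0 by linarith
    have "c = contour_integral (circlepath 0 r') (\<lambda>z. 1 / pl L z)"
    proof -
      have s1: "{p \<in> set L. norm p < r} = set L" "{p \<in> set L. norm p < r'} = set L"
        using assms(2) r' by force+
      show ?thesis unfolding c_def
        by (subst (1 2) circ_residues[OF _ holo]) (use assms(2) r' r0 s1 in auto)
    qed
    moreover have "(\<lambda>z. 1 / pl L z) contour_integrable_on (circlepath 0 r')"
    proof (rule contour_integrable_continuous_circlepath)
      have "\<forall>z\<in>sphere 0 r'. z \<notin> set L" using assms(2) r' by force
      then show "continuous_on (path_image (circlepath 0 r')) (\<lambda>z. 1 / pl L z)"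
        using r'0 by (auto intro!: continuous_intros simp: pl_nz)
    qed
    ultimately have hc: "((\<lambda>z. 1 / pl L z) has_contour_integral c) (circlepath 0 r')"
      using has_contour_integral_integral by auto
    have nb: "norm (1 / pl L x) \<le> 4 / r'^2" if x: "norm (x - 0) = r'" for x
    proof -
      have "\<forall>y\<in>set L. r'/2 \<le> norm (x - y)"
      proof
        fix y assume "y \<in> set L"
        then have "norm y \<le> S" unfolding S_def by (rule norm_le_sum_norms)
        moreover have "norm x - norm y \<le> norm (x - y)" by (rule norm_triangle_ineq2)
        ultimately show "r'/2 \<le> norm (x - y)" using x r' by auto
      qed
      then have "(r'/2) ^ length L \<le> norm (pl L x)" using r'0 by (intro pl_norm_ge) auto
      moreover have "(r'/2)^2 \<le> (r'/2) ^ length L"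
        using assms(1) r' S0 by (intro power_increasing) auto
      ultimately have "(r'/2)^2 \<le> norm (pl L x)" by linarith
      moreover have p: "0 < (r'/2)^2" using r'0 by simp
      ultimately have "0 < norm (pl L x)" by linarith
      with p \<open>(r'/2)^2 \<le> norm (pl L x)\<close> have "1 / norm (pl L x) \<le> 1 / (r'/2)^2"
        by (intro divide_left_mono) auto
      then show ?thesis by (simp add: norm_divide power2_eq_square)
    qed
    have "norm c \<le> 4 / r'^2 * (2 * pi * r')"
      by (rule has_contour_integral_bound_circlepath[OF hc]) (use r'0 nb in auto)
    also have "\<dots> = 8 * pi / r'" using r'0 by (simp add: power2_eq_square field_simps)
    finally show ?thesis .
  qed
  show ?thesis
  proof (rule ccontr)
    assume "\<not> ?thesis"
    then have nc: "norm c > 0" unfolding c_def by simp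
    define r' where "r' = max (max r (2*S+2)) (16 * pi / norm c)"
    have r'p: "r' > 0" "r' \<ge> 16 * pi / norm c" using r0 unfolding r'_def by auto
    have "norm c \<le> 8 * pi / r'" by (rule bound) (auto simp: r'_def)
    also have "\<dots> \<le> 8 * pi / (16 * pi / norm c)"
      using r'p nc by (intro divide_left_mono) auto
    also have "\<dots> = norm c / 2" by simp
    finally show False using nc by simp
  qed
qed


definition D :: "real \<Rightarrow> complex list \<Rightarrow> complex \<Rightarrow> complex" where
  "D r L t = contour_integral (circlepath 0 r) (\<lambda>z. exp (t * z) / pl L z)"

lemma exp_dd_D: "exp_dd t L = D (1 + (\<Sum>y\<leftarrow>L. norm y)) L (of_real t) / (2*pi*\<i>)"
  by (simp add: exp_dd_def divdiff_def D_def pl_def)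

lemma norm_lt_rad: "(y::complex) \<in> set L \<Longrightarrow> norm y < 1 + (\<Sum>y\<leftarrow>L. norm y)"
  using norm_le_sum_norms[of y L] by simp

lemma D_indep:
  assumes "\<forall>y\<in>set L. norm y < r" "\<forall>y\<in>set L. norm y < r'" "r > 0" "r' > 0"
  shows "D r L t = D r' L t"
proof -
  have holo: "(\<lambda>z. exp (t * z) / pl L z) holomorphic_on (UNIV - set L)"
    by (rule pl_holo_div) (auto intro!: holomorphic_intros)
  have s1: "{p \<in> set L. norm p < r} = set L" "{p \<in> set L. norm p < r'} = set L"
    using assms by force+
  show ?thesis unfolding D_def
    by (subst (1 2) circ_residues[OF _ holo]) (use assms s1 in auto)
qed

lemma circ_outside:
  assumes "\<forall>y\<in>set L. norm y < r" "norm z > r" "r > 0" "L \<noteq> []"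
  shows "contour_integral (circlepath 0 r) (\<lambda>w. 1 / ((z - w) * pl L w)) = 2*pi*\<i> / pl L z"
proof -
  define g where "g = (\<lambda>w. 1 / ((z - w) * pl L w))"
  have zL: "z \<notin> set L" using assms by force
  have geq: "g = (\<lambda>w. - (1 / pl (z # L) w))" unfolding g_def
    by (auto simp: fun_eq_iff divide_simps algebra_simps)
  have geq2: "g = (\<lambda>w. (- 1 / pl L w) / (w - z))" unfolding g_def
    by (auto simp: fun_eq_iff divide_simps algebra_simps)
  have holo: "g holomorphic_on (UNIV - set (z # L))" unfolding geq
    using pl_holo_div[of "\<lambda>_. 1" "z # L"] by (auto intro!: holomorphic_intros)
  have fin: "finite (set (z # L))" by simp
  define R where "R = norm z + 1"
  have "0 = - contour_integral (circlepath 0 R) (\<lambda>w. 1 / pl (z # L) w)"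
    using circ_zero[of "z # L" R] assms zL unfolding R_def
    by (cases L) (auto, smt (verit) set_ConsD)
  also have "\<dots> = contour_integral (circlepath 0 R) g"
    unfolding geq contour_integral_neg ..
  also have "\<dots> = 2*pi*\<i> * (\<Sum>p\<in>{p\<in>set (z # L). norm p < R}. residue g p)"
    by (rule circ_residues[OF fin holo]) (use assms in \<open>auto simp: R_def\<close>)
  also have "{p\<in>set (z # L). norm p < R} = insert z (set L)"
    using assms unfolding R_def by force
  also have "(\<Sum>p\<in>insert z (set L). residue g p) = residue g z + (\<Sum>p\<in>set L. residue g p)"
    using zL by simp
  finally have e1: "(\<Sum>p\<in>set L. residue g p) = - residue g z" by (simp add: eq_neg_iff_add_eq_0 add.commute)
  have "residue g z = - 1 / pl L z" unfolding geq2
    by (rule residue_simple[of "UNIV - set L"]) (use zL in \<open>auto intro!: holomorphic_intros simp: pl_nz finite_imp_closed open_Diff\<close>)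
  have "contour_integral (circlepath 0 r) g = 2*pi*\<i> * (\<Sum>p\<in>{p\<in>set (z # L). norm p < r}. residue g p)"
    by (rule circ_residues[OF fin holo]) (use assms in auto)
  also have "{p\<in>set (z # L). norm p < r} = set L"
    using assms by force
  finally show ?thesis using e1 \<open>residue g z = - 1 / pl L z\<close> unfolding g_def by simp
qed


lemma pl_nz_sphere: "\<forall>y\<in>set L. norm y < r \<Longrightarrow> norm z = r \<Longrightarrow> pl L z \<noteq> 0"
  by (rule pl_nz) auto

lemma circ_int: "continuous_on (sphere 0 r) f \<Longrightarrow> r > 0 \<Longrightarrow> f contour_integrable_on circlepath 0 r"
  by (rule contour_integrable_continuous_circlepath) simp

lemma swap_lin_circ:
  assumes "continuous_on (closed_segment a b \<times> sphere 0 r) (\<lambda>(x,y). f x y)" "r > 0"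
  shows "contour_integral (linepath a b) (\<lambda>x. contour_integral (circlepath 0 r) (f x)) =
         contour_integral (circlepath 0 r) (\<lambda>y. contour_integral (linepath a b) (\<lambda>x. f x y))"
  by (rule contour_integral_swap) (use assms in \<open>auto simp: vector_derivative_circlepath intro!: continuous_intros\<close>)

lemma swap_circ_circ:
  assumes "continuous_on (sphere 0 r1 \<times> sphere 0 r2) (\<lambda>(x,y). f x y)" "r1 > 0" "r2 > 0"
  shows "contour_integral (circlepath 0 r1) (\<lambda>x. contour_integral (circlepath 0 r2) (f x)) =
         contour_integral (circlepath 0 r2) (\<lambda>y. contour_integral (circlepath 0 r1) (\<lambda>x. f x y))"
  by (rule contour_integral_swap) (use assms in \<open>auto simp: vector_derivative_circlepath intro!: continuous_intros\<close>)



lemma rad_pos: "0 < 1 + (\<Sum>y\<leftarrow>(L::complex list). norm y)"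
proof -
  have "0 \<le> (\<Sum>y\<leftarrow>L. norm y)" by (rule sum_list_nonneg) auto
  then show ?thesis by linarith
qed

theorem lemma1:
  fixes xs :: "complex list" and q j :: nat and \<beta> :: real
  assumes "length xs = q + 1" and "q \<ge> 1" and "j \<le> q - 1" and "\<beta> > 0"
  shows "((\<lambda>\<tau>. exp_dd (-\<tau>) (drop (j+1) xs) * exp_dd (-(\<beta> - \<tau>)) (take (j+1) xs))
           has_integral (- exp_dd (-\<beta>) xs)) {0..\<beta>}"
proof -
  define A where "A = drop (j+1) xs"
  define B where "B = take (j+1) xs"
  have Ane: "A \<noteq> []" and Bne: "B \<noteq> []" using assms unfolding A_def B_def by auto
  have xsBA: "xs = B @ A" unfolding A_def B_def by simp
  define R where "R = 1 + (\<Sum>y\<leftarrow>xs. norm y)"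
  define rA where "rA = R + 1"
  define rB where "rB = R"
  define c where "c = 2 * pi * \<i>"
  have c0: "c \<noteq> 0" by (simp add: c_def)
  have nxs: "\<forall>y\<in>set xs. norm y < R" unfolding R_def using norm_lt_rad by blast
  have R0: "R > 0" proof -
    have "0 \<le> (\<Sum>y\<leftarrow>xs. norm y)" by (rule sum_list_nonneg) auto
    then show ?thesis unfolding R_def by linarith
  qed
  have rA0: "rA > 0" and rB0: "rB > 0" and rAB: "rB < rA" using R0 by (auto simp: rA_def rB_def)
  have nA: "\<forall>y\<in>set A. norm y < rB" "\<forall>y\<in>set A. norm y < rA"
    using nxs set_drop_subset[of "j+1" xs] unfolding A_def rA_def rB_def by force+
  have nB: "\<forall>y\<in>set B. norm y < rB" "\<forall>y\<in>set B. norm y < rA"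
    using nxs set_take_subset[of "j+1" xs] unfolding B_def rA_def rB_def by force+
  have nX: "\<forall>y\<in>set xs. norm y < rA" using nxs unfolding rA_def by force
  define DA where "DA = (\<lambda>\<tau>. D rA A (- \<tau>))"
  define DB where "DB = (\<lambda>\<tau>. D rB B (\<tau> - of_real \<beta>))"
  have e1: "exp_dd (-\<tau>) A = DA (of_real \<tau>) / c" for \<tau>
    unfolding exp_dd_D DA_def c_def
    by (subst D_indep[of _ _ rA]) (use nA norm_lt_rad rA0 rad_pos[of A] in auto)
  have e2: "exp_dd (-(\<beta> - \<tau>)) B = DB (of_real \<tau>) / c" for \<tau>
    unfolding exp_dd_D DB_def c_def
    by (subst D_indep[of _ _ rB]) (use nB norm_lt_rad rB0 rad_pos[of B] in auto)
  have e3: "exp_dd (-\<beta>) xs = D rA xs (- of_real \<beta>) / c"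
    unfolding exp_dd_D c_def
    by (subst D_indep[of _ _ rA]) (use nX norm_lt_rad rA0 rad_pos[of xs] in auto)
  have DAc: "continuous_on UNIV DA"
    unfolding DA_def D_def
    by (rule cont_circ_param[OF _ rA0]) (use nA in \<open>auto simp: case_prod_unfold pl_nz_sphere intro!: continuous_intros\<close>)
  have DBc: "continuous_on UNIV DB"
    unfolding DB_def D_def
    by (rule cont_circ_param[OF _ rB0]) (use nB in \<open>auto simp: case_prod_unfold pl_nz_sphere intro!: continuous_intros\<close>)
  define lin where "lin = linepath 0 (complex_of_real \<beta>)"
  define CA where "CA = circlepath 0 rA"
  define CB where "CB = circlepath 0 rB"
  define \<Psi> where "\<Psi> = (\<lambda>\<tau>. DA \<tau> * DB \<tau> / c^2)"
  have DAc': "continuous_on S (\<lambda>x. DA (g x))" if "continuous_on S g" for S and g :: "'a::topological_space \<Rightarrow> complex"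
    using continuous_on_compose2[OF DAc that] by auto
  have DBc': "continuous_on S (\<lambda>x. DB (g x))" if "continuous_on S g" for S and g :: "'a::topological_space \<Rightarrow> complex"
    using continuous_on_compose2[OF DBc that] by auto
  have \<Psi>int: "\<Psi> contour_integrable_on lin" unfolding lin_def \<Psi>_def
    by (rule contour_integrable_continuous_linepath) (use c0 in \<open>auto intro!: continuous_intros DAc' DBc'\<close>)
  define f1 where "f1 = (\<lambda>\<tau> z. exp (- \<tau> * z) / pl A z * DB \<tau>)"
  define J where "J = (\<lambda>z. contour_integral CB (\<lambda>w. exp (- of_real \<beta> * w) / ((z - w) * pl B w)))"
  have sa: "contour_integral lin (\<lambda>\<tau>. DA \<tau> * DB \<tau>) = contour_integral lin (\<lambda>\<tau>. contour_integral CA (f1 \<tau>))"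
  proof (rule contour_integral_eq)
    fix \<tau> 
    have "contour_integral CA (f1 \<tau>) = DA \<tau> * DB \<tau>"
      unfolding f1_def DA_def D_def CA_def
      by (rule contour_integral_rmul, rule circ_int) (use nA rA0 in \<open>auto simp: pl_nz_sphere intro!: continuous_intros\<close>)
    then show "DA \<tau> * DB \<tau> = contour_integral CA (f1 \<tau>)" by simp
  qed
  have sb: "contour_integral lin (\<lambda>\<tau>. contour_integral CA (f1 \<tau>)) = contour_integral CA (\<lambda>z. contour_integral lin (\<lambda>\<tau>. f1 \<tau> z))"
    unfolding lin_def CA_def f1_def
    by (rule swap_lin_circ[OF _ rA0]) (use nA in \<open>auto simp: case_prod_unfold pl_nz_sphere intro!: continuous_intros DBc'\<close>)
  have sc: "contour_integral lin (\<lambda>\<tau>. f1 \<tau> z) = (J z - exp (- of_real \<beta> * z) * (c / pl B z)) / pl A z"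
    if z: "z \<in> sphere 0 rA" for z
  proof -
    have nz: "norm z = rA" using z by simp
    have pAz: "pl A z \<noteq> 0" using pl_nz_sphere[OF nA(2) nz] .
    have pBz: "pl B z \<noteq> 0" using pl_nz_sphere[OF nB(2) nz] .
    define f2 where "f2 = (\<lambda>\<tau> w. exp (- \<tau> * z) * (exp ((\<tau> - of_real \<beta>) * w) / pl B w))"
    have f2c: "continuous_on (UNIV \<times> sphere 0 rB) (\<lambda>(x,y). f2 x y)"
      unfolding f2_def using nB(1) by (auto simp: case_prod_unfold pl_nz_sphere intro!: continuous_intros)
    have s1: "f1 \<tau> z = (1 / pl A z) * contour_integral CB (f2 \<tau>)" for \<tau>
    proof -
      have "contour_integral CB (f2 \<tau>) = exp (- \<tau> * z) * DB \<tau>"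
        unfolding f2_def DB_def D_def CB_def
        by (rule contour_integral_lmul, rule circ_int) (use nB rB0 in \<open>auto simp: pl_nz_sphere intro!: continuous_intros\<close>)
      then show ?thesis unfolding f1_def by simp
    qed
    have int1: "(\<lambda>\<tau>. contour_integral CB (f2 \<tau>)) contour_integrable_on lin"
      unfolding lin_def CB_def
      by (rule contour_integrable_continuous_linepath, rule continuous_on_subset[OF cont_circ_param[OF f2c rB0]]) auto
    have "contour_integral lin (\<lambda>\<tau>. f1 \<tau> z) = (1 / pl A z) * contour_integral lin (\<lambda>\<tau>. contour_integral CB (f2 \<tau>))"
      unfolding s1 by (rule contour_integral_lmul[OF int1])
    also have "contour_integral lin (\<lambda>\<tau>. contour_integral CB (f2 \<tau>)) = contour_integral CB (\<lambda>w. contour_integral lin (\<lambda>\<tau>. f2 \<tau> w))"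
      unfolding lin_def CB_def by (rule swap_lin_circ[OF continuous_on_subset[OF f2c] rB0]) auto
    also have "\<dots> = contour_integral CB (\<lambda>w. exp (- of_real \<beta> * w) / ((z - w) * pl B w) - exp (- of_real \<beta> * z) * (1 / ((z - w) * pl B w)))"
    proof (rule contour_integral_eq)
      fix w assume "w \<in> path_image CB"
      then have nw: "norm w = rB" unfolding CB_def using rB0 by simp
      have zw: "w - z \<noteq> 0" using nw nz rAB by auto
      have pBw: "pl B w \<noteq> 0" using pl_nz_sphere[OF nB(1) nw] .
      define F where "F = (\<lambda>\<tau>. exp (- \<tau> * z + (\<tau> - of_real \<beta>) * w) / ((w - z) * pl B w))"
      have "((\<lambda>\<tau>. F \<tau>) has_field_derivative f2 \<tau> w) (at \<tau> within UNIV)" for \<tau>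
      proof -
        have "((\<lambda>\<tau>. F \<tau>) has_field_derivative exp (- \<tau> * z + (\<tau> - of_real \<beta>) * w) * (- z + w) / ((w - z) * pl B w)) (at \<tau> within UNIV)"
          unfolding F_def using zw pBw by (auto intro!: derivative_eq_intros)
        moreover have "exp (- \<tau> * z + (\<tau> - of_real \<beta>) * w) * (- z + w) / ((w - z) * pl B w) = f2 \<tau> w"
          unfolding f2_def exp_add[of "- \<tau> * z" "(\<tau> - of_real \<beta>) * w"] using zw pBw by (simp add: field_simps)
        ultimately show ?thesis by simp
      qed
      then have "((\<lambda>\<tau>. f2 \<tau> w) has_contour_integral (F (of_real \<beta>) - F 0)) lin"
        unfolding lin_def using contour_integral_primitive[of UNIV F "\<lambda>\<tau>. f2 \<tau> w" "linepath 0 (complex_of_real \<beta>)"] by simp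
      moreover have "F (of_real \<beta>) - F 0 = exp (- of_real \<beta> * w) / ((z - w) * pl B w) - exp (- of_real \<beta> * z) * (1 / ((z - w) * pl B w))"
        unfolding F_def using zw pBw by (simp add: field_simps)
      ultimately show "contour_integral lin (\<lambda>\<tau>. f2 \<tau> w) = exp (- of_real \<beta> * w) / ((z - w) * pl B w) - exp (- of_real \<beta> * z) * (1 / ((z - w) * pl B w))"
        using contour_integral_unique by simp
    qed
    also have "\<dots> = J z - exp (- of_real \<beta> * z) * contour_integral CB (\<lambda>w. 1 / ((z - w) * pl B w))"
    proof -
      have nzw: "\<forall>w\<in>sphere 0 rB. z - w \<noteq> 0" using nz rAB by auto
      have i1: "(\<lambda>w. exp (- of_real \<beta> * w) / ((z - w) * pl B w)) contour_integrable_on CB"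
        unfolding CB_def by (rule circ_int[OF _ rB0]) (use nB nzw in \<open>auto simp: pl_nz_sphere intro!: continuous_intros\<close>)
      have i2: "(\<lambda>w. 1 / ((z - w) * pl B w)) contour_integrable_on CB"
        unfolding CB_def by (rule circ_int[OF _ rB0]) (use nB nzw in \<open>auto simp: pl_nz_sphere intro!: continuous_intros\<close>)
      show ?thesis unfolding J_def
        by (subst contour_integral_diff[OF i1 contour_integrable_lmul[OF i2]], subst contour_integral_lmul[OF i2]) simp
    qed
    also have "contour_integral CB (\<lambda>w. 1 / ((z - w) * pl B w)) = c / pl B z"
      unfolding CB_def c_def by (rule circ_outside) (use nB rB0 nz rAB Bne in auto)
    finally show ?thesis by (simp add: field_simps)
  qed
  have nzw: "\<forall>p\<in>sphere (0::complex) rA \<times> sphere (0::complex) rB. fst p - snd p \<noteq> 0"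
  proof
    fix p :: "complex \<times> complex" assume "p \<in> sphere 0 rA \<times> sphere 0 rB"
    then have "norm (fst p) = rA" "norm (snd p) = rB" by (auto simp: mem_Times_iff)
    then have "fst p \<noteq> snd p" using rAB by auto
    then show "fst p - snd p \<noteq> 0" by simp
  qed
  define F3 where "F3 = (\<lambda>z w. exp (- of_real \<beta> * w) / ((z - w) * pl B w))"
  have F3c: "continuous_on (sphere 0 rA \<times> sphere 0 rB) (\<lambda>(x,y). F3 x y)"
    unfolding F3_def using nB(1) nzw by (auto simp: case_prod_unfold pl_nz_sphere intro!: continuous_intros)
  have Jc: "continuous_on (sphere 0 rA) J"
    unfolding J_def CB_def using cont_circ_param[OF F3c rB0] unfolding F3_def .
  have sd: "contour_integral CA (\<lambda>z. (J z - exp (- of_real \<beta> * z) * (c / pl B z)) / pl A z)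
     = contour_integral CA (\<lambda>z. J z / pl A z) - c * D rA xs (- of_real \<beta>)"
  proof -
    have i1: "(\<lambda>z. J z / pl A z) contour_integrable_on CA"
      unfolding CA_def by (rule circ_int[OF _ rA0]) (use nA in \<open>auto simp: pl_nz_sphere intro!: continuous_intros Jc\<close>)
    have i2: "(\<lambda>z. exp (- of_real \<beta> * z) / pl xs z) contour_integrable_on CA"
      unfolding CA_def by (rule circ_int[OF _ rA0]) (use nX in \<open>auto simp: pl_nz_sphere intro!: continuous_intros\<close>)
    have "contour_integral CA (\<lambda>z. (J z - exp (- of_real \<beta> * z) * (c / pl B z)) / pl A z)
       = contour_integral CA (\<lambda>z. J z / pl A z - c * (exp (- of_real \<beta> * z) / pl xs z))"
    proof (rule contour_integral_eq)
      fix z assume "z \<in> path_image CA"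
      then have nz: "norm z = rA" unfolding CA_def using rA0 by simp
      have "pl A z \<noteq> 0" "pl B z \<noteq> 0" using pl_nz_sphere[OF nA(2) nz] pl_nz_sphere[OF nB(2) nz] by auto
      then show "(J z - exp (- of_real \<beta> * z) * (c / pl B z)) / pl A z = J z / pl A z - c * (exp (- of_real \<beta> * z) / pl xs z)"
        unfolding xsBA pl_append by (simp add: field_simps)
    qed
    also have "\<dots> = contour_integral CA (\<lambda>z. J z / pl A z) - c * contour_integral CA (\<lambda>z. exp (- of_real \<beta> * z) / pl xs z)"
      by (subst contour_integral_diff[OF i1 contour_integrable_lmul[OF i2]], subst contour_integral_lmul[OF i2]) simp
    finally show ?thesis unfolding D_def CA_def .
  qed
  have se: "contour_integral CA (\<lambda>z. J z / pl A z) = 0"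
  proof -
    have "contour_integral CA (\<lambda>z. J z / pl A z) = contour_integral CA (\<lambda>z. contour_integral CB (\<lambda>w. F3 z w / pl A z))"
    proof (rule contour_integral_eq)
      fix z assume "z \<in> path_image CA"
      then have nz: "norm z = rA" unfolding CA_def using rA0 by simp
      have "(\<lambda>w. F3 z w) contour_integrable_on CB"
        unfolding CB_def by (rule circ_int[OF _ rB0], rule continuous_on_compose2[OF F3c, of _ "\<lambda>w. (z, w)", simplified])
          (use nz in \<open>auto intro!: continuous_intros\<close>)
      then have "contour_integral CB (\<lambda>w. F3 z w / pl A z) = contour_integral CB (\<lambda>w. F3 z w) / pl A z"
        by (rule contour_integral_div)
      then show "J z / pl A z = contour_integral CB (\<lambda>w. F3 z w / pl A z)"
        unfolding J_def F3_def by simp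
    qed
    also have "\<dots> = contour_integral CB (\<lambda>w. contour_integral CA (\<lambda>z. F3 z w / pl A z))"
      unfolding CA_def CB_def
      by (rule swap_circ_circ[OF _ rA0 rB0]) (use nA F3c in \<open>auto simp: case_prod_unfold pl_nz_sphere intro!: continuous_intros\<close>)
    also have "\<dots> = contour_integral CB (\<lambda>w. 0)"
    proof (rule contour_integral_eq)
      fix w assume "w \<in> path_image CB"
      then have nw: "norm w = rB" unfolding CB_def using rB0 by simp
      have "contour_integral CA (\<lambda>z. F3 z w / pl A z) = contour_integral CA (\<lambda>z. (exp (- of_real \<beta> * w) / pl B w) * (1 / pl (w # A) z))"
        unfolding F3_def by (rule contour_integral_eq) (simp add: field_simps)
      also have "\<dots> = (exp (- of_real \<beta> * w) / pl B w) * contour_integral CA (\<lambda>z. 1 / pl (w # A) z)"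
      proof (rule contour_integral_lmul)
        have "\<forall>y\<in>set (w # A). norm y < rA" using nA(2) nw rAB by auto
        then show "(\<lambda>z. 1 / pl (w # A) z) contour_integrable_on CA"
          unfolding CA_def by (intro circ_int[OF _ rA0]) (auto simp: pl_nz_sphere intro!: continuous_intros)
      qed
      also have "contour_integral CA (\<lambda>z. 1 / pl (w # A) z) = 0"
        unfolding CA_def by (rule circ_zero) (use nA(2) nw rAB Ane in \<open>auto simp: Suc_le_eq\<close>)
      finally show "contour_integral CA (\<lambda>z. F3 z w / pl A z) = 0" by simp
    qed
    finally show ?thesis by simp
  qed
  have "contour_integral lin \<Psi> * c^2 = contour_integral lin (\<lambda>\<tau>. DA \<tau> * DB \<tau>)"
  proof -
    have "(\<lambda>\<tau>. DA \<tau> * DB \<tau>) contour_integrable_on lin" unfolding lin_def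
      by (rule contour_integrable_continuous_linepath) (auto intro!: continuous_intros DAc' DBc')
    from contour_integral_div[OF this, of "c^2"] show ?thesis using c0 unfolding \<Psi>_def by simp
  qed
  also have "\<dots> = - c * D rA xs (- of_real \<beta>)"
    unfolding sa sb using contour_integral_eq[of CA "\<lambda>z. contour_integral lin (\<lambda>\<tau>. f1 \<tau> z)"
      "\<lambda>z. (J z - exp (- of_real \<beta> * z) * (c / pl B z)) / pl A z"] sc sd se rA0
    unfolding CA_def by simp
  finally have V0: "contour_integral lin \<Psi> * c^2 = - c * D rA xs (- of_real \<beta>)" .
  then have "c * (contour_integral lin \<Psi> * c) = c * (- D rA xs (- of_real \<beta>))"
    by (simp add: power2_eq_square algebra_simps)
  then have "contour_integral lin \<Psi> * c = - D rA xs (- of_real \<beta>)" using c0 mult_left_cancel by blast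
  then have V: "contour_integral lin \<Psi> = - exp_dd (-\<beta>) xs"
    using c0 unfolding e3 by (simp add: field_simps)
  have "(\<Psi> has_contour_integral (- exp_dd (-\<beta>) xs)) (linepath 0 (complex_of_real \<beta>))"
    using has_contour_integral_integral[OF \<Psi>int] V unfolding lin_def by simp
  then have "((\<lambda>x. \<Psi> (complex_of_real x)) has_integral (- exp_dd (-\<beta>) xs)) {0..\<beta>}"
    using has_contour_integral_linepath_Reals_iff[of 0 "complex_of_real \<beta>" \<Psi>] assms(4) by simp
  moreover have "(\<lambda>x. \<Psi> (complex_of_real x)) = (\<lambda>\<tau>. exp_dd (-\<tau>) A * exp_dd (-(\<beta> - \<tau>)) B)"
    unfolding e1 e2 \<Psi>_def by (simp add: power2_eq_square)
  ultimately show ?thesis unfolding A_def B_def by simp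
qed

end
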